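(* Fix $k\in\{0,1,\dots,9\}$ and even integers $A$ and $B$. Then there exist $\hat\kappa,\beta,d_1,\dots,d_k$ in the K3 lattice $L$ such that $(\hat\kappa,\hat\kappa)=B$, $(\beta,\beta)=A$, $(\hat\kappa,\beta)=0$, $(\hat\kappa,d_i)=1$ and $(\beta,d_i)=0$ for all $i$, and $(d_i,d_j)=-2\delta_{ij}$ for all $i,j$; moreover, $\hat\kappa,\beta,d_1,\dots,d_k$ generate a primitive sublattice of $L$.
   Context: The K3 lattice $L$ is the even unimodular lattice of signature $(3,19)$, with its symmetric bilinear form $(\cdot,\cdot)$. A sublattice $S\subset L$ is primitive if $L/S$ is torsion-free, i.e. every element of $L$ lying in $S\otimes\mathbb{R}$ lies in $S$. *)

theory Defs
  imports Main
begin

text \<open>Concrete model of the K3 lattice L = U^3 (+) E8(-1)^2 on Z^22.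
  Vectors are functions nat => int supported on {0..<22}.
  Coordinates 0..5: three hyperbolic planes U (pairs {0,1},{2,3},{4,5});
  coordinates 6..13 and 14..21: two copies of E8(-1).\<close>

definition e8_adj :: "nat \<Rightarrow> nat \<Rightarrow> bool" where
  "e8_adj i j \<longleftrightarrow> i < 8 \<and> j < 8 \<and>
     ((i + 1 = j \<and> j \<le> 6) \<or> (j + 1 = i \<and> i \<le> 6) \<or> (i = 4 \<and> j = 7) \<or> (i = 7 \<and> j = 4))"

definition e8m_gram :: "nat \<Rightarrow> nat \<Rightarrow> int" where
  "e8m_gram i j = (if i = j then -2 else if e8_adj i j then 1 else 0)"

definition k3_gram :: "nat \<Rightarrow> nat \<Rightarrow> int" where
  "k3_gram i j =
    (if i < 6 \<and> j < 6 then (if i div 2 = j div 2 \<and> i \<noteq> j then 1 else 0)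
     else if 6 \<le> i \<and> i < 14 \<and> 6 \<le> j \<and> j < 14 then e8m_gram (i - 6) (j - 6)
     else if 14 \<le> i \<and> i < 22 \<and> 14 \<le> j \<and> j < 22 then e8m_gram (i - 14) (j - 14)
     else 0)"

definition k3_lattice :: "(nat \<Rightarrow> int) set" where
  "k3_lattice = {x. \<forall>i\<ge>22. x i = 0}"

definition k3_form :: "(nat \<Rightarrow> int) \<Rightarrow> (nat \<Rightarrow> int) \<Rightarrow> int" where
  "k3_form x y = (\<Sum>i<22. \<Sum>j<22. x i * k3_gram i j * y j)"

definition lattice_span :: "(nat \<Rightarrow> int) list \<Rightarrow> (nat \<Rightarrow> int) set" where
  "lattice_span vs = {(\<lambda>i. \<Sum>j<length vs. c j * (vs ! j) i) | c :: nat \<Rightarrow> int. True}"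

definition k3_primitive :: "(nat \<Rightarrow> int) set \<Rightarrow> bool" where
  "k3_primitive S \<longleftrightarrow> S \<subseteq> k3_lattice \<and>
     (\<forall>x\<in>k3_lattice. \<forall>n::int. n \<noteq> 0 \<and> (\<lambda>i. n * x i) \<in> S \<longrightarrow> x \<in> S)"

end

theory Submission imports Defs begin

definition uv :: "nat \<Rightarrow> nat \<Rightarrow> int" where "uv p = (\<lambda>i. if i = p then 1 else 0)"
definition sm :: "int \<Rightarrow> (nat \<Rightarrow> int) \<Rightarrow> nat \<Rightarrow> int" where "sm c x = (\<lambda>i. c * x i)"
definition ad :: "(nat \<Rightarrow> int) \<Rightarrow> (nat \<Rightarrow> int) \<Rightarrow> nat \<Rightarrow> int" (infixl "\<oplus>" 65) where "ad x y = (\<lambda>i. x i + y i)"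
definition sb :: "(nat \<Rightarrow> int) \<Rightarrow> (nat \<Rightarrow> int) \<Rightarrow> nat \<Rightarrow> int" (infixl "\<ominus>" 65) where "sb x y = (\<lambda>i. x i - y i)"

lemma form_add_l: "k3_form (x \<oplus> y) z = k3_form x z + k3_form y z"
  by (simp add: k3_form_def ad_def algebra_simps sum.distrib)
lemma form_add_r: "k3_form z (x \<oplus> y) = k3_form z x + k3_form z y"
  by (simp add: k3_form_def ad_def algebra_simps sum.distrib)
lemma form_diff_l: "k3_form (x \<ominus> y) z = k3_form x z - k3_form y z"
  by (simp add: k3_form_def sb_def algebra_simps sum_subtractf)
lemma form_diff_r: "k3_form z (x \<ominus> y) = k3_form z x - k3_form z y"
  by (simp add: k3_form_def sb_def algebra_simps sum_subtractf)
lemma form_sm_l: "k3_form (sm c x) z = c * k3_form x z"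
  by (simp add: k3_form_def sm_def sum_distrib_left mult.assoc)
lemma form_sm_r: "k3_form z (sm c x) = c * k3_form z x"
  by (simp add: k3_form_def sm_def sum_distrib_left algebra_simps)
lemma ifm1: "(if P then 1 else 0) * (a::int) = (if P then a else 0)" by simp
lemma ifm2: "(a::int) * (if P then 1 else 0) = (if P then a else 0)" by simp
lemma form_uv: "p < 22 \<Longrightarrow> q < 22 \<Longrightarrow> k3_form (uv p) (uv q) = k3_gram p q"
  by (simp add: k3_form_def uv_def ifm1 ifm2 if_distrib[of "\<lambda>x. x * _"] sum.delta' cong: if_cong)

lemma test: "k3_form (uv 0 \<oplus> sm m (uv 1) \<oplus> uv 5 \<oplus> uv 7 \<oplus> uv 11 \<oplus> uv 15 \<oplus> uv 19)
   (uv 0 \<oplus> sm m (uv 1) \<oplus> uv 5 \<oplus> uv 7 \<oplus> uv 11 \<oplus> uv 15 \<oplus> uv 19) = 2*m - 8"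
  by (simp add: form_add_l form_add_r form_sm_l form_sm_r form_uv k3_gram_def e8m_gram_def e8_adj_def)

lemma prim:
  assumes L: "\<forall>v\<in>set vs. v \<in> k3_lattice"
  and P: "\<And>j l. j < length vs \<Longrightarrow> l < length vs \<Longrightarrow> (vs!l) (piv j) = (if j = l then 1 else 0)"
  shows "k3_primitive (lattice_span vs)"
  unfolding k3_primitive_def
proof (intro conjI ballI allI impI)
  show "lattice_span vs \<subseteq> k3_lattice"
  proof
    fix x assume "x \<in> lattice_span vs"
    then obtain c where x: "x = (\<lambda>i. \<Sum>j<length vs. c j * (vs ! j) i)"
      unfolding lattice_span_def by blast
    have "\<forall>i\<ge>22. x i = 0"
    proof (intro allI impI)
      fix i :: nat assume "22 \<le> i"
      have "\<And>j. j < length vs \<Longrightarrow> (vs ! j) i = 0"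
        using L \<open>22 \<le> i\<close> nth_mem unfolding k3_lattice_def by blast
      then show "x i = 0" unfolding x by simp
    qed
    then show "x \<in> k3_lattice" unfolding k3_lattice_def by simp
  qed
next
  fix x and n :: int
  assume x: "x \<in> k3_lattice" and h: "n \<noteq> 0 \<and> (\<lambda>i. n * x i) \<in> lattice_span vs"
  then obtain c where c: "(\<lambda>i. n * x i) = (\<lambda>i. \<Sum>j<length vs. c j * (vs ! j) i)"
    unfolding lattice_span_def by blast
  have cl: "c l = n * x (piv l)" if "l < length vs" for l
  proof -
    have "n * x (piv l) = (\<Sum>j<length vs. c j * (vs ! j) (piv l))" using fun_cong[OF c] by simp
    also have "\<dots> = (\<Sum>j<length vs. (if j = l then c j else 0))"
      by (rule sum.cong) (auto simp: P that)
    also have "\<dots> = c l" using that by (simp add: sum.delta')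
    finally show ?thesis by simp
  qed
  have "x = (\<lambda>i. \<Sum>j<length vs. x (piv j) * (vs ! j) i)"
  proof
    fix i
    have "n * x i = (\<Sum>j<length vs. c j * (vs ! j) i)" using fun_cong[OF c] by simp
    also have "\<dots> = (\<Sum>j<length vs. n * (x (piv j) * (vs ! j) i))"
      by (rule sum.cong) (auto simp: cl)
    also have "\<dots> = n * (\<Sum>j<length vs. x (piv j) * (vs ! j) i)" by (simp add: sum_distrib_left)
    finally show "x i = (\<Sum>j<length vs. x (piv j) * (vs ! j) i)" using h by simp
  qed
  then show "x \<in> lattice_span vs" unfolding lattice_span_def
    by (intro CollectI exI[of _ "\<lambda>j. x (piv j)"]) simp
qed

lemma lat_uv: "p < 22 \<Longrightarrow> uv p \<in> k3_lattice" by (simp add: k3_lattice_def uv_def)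
lemma lat_ad: "x \<in> k3_lattice \<Longrightarrow> y \<in> k3_lattice \<Longrightarrow> x \<oplus> y \<in> k3_lattice" by (simp add: k3_lattice_def ad_def)
lemma lat_sb: "x \<in> k3_lattice \<Longrightarrow> y \<in> k3_lattice \<Longrightarrow> x \<ominus> y \<in> k3_lattice" by (simp add: k3_lattice_def sb_def)
lemma lat_sm: "x \<in> k3_lattice \<Longrightarrow> sm c x \<in> k3_lattice" by (simp add: k3_lattice_def sm_def)

definition dp :: "nat \<Rightarrow> nat" where "dp j = [6,8,10,12,14,16,18,20,4] ! j"
definition dv :: "nat \<Rightarrow> nat \<Rightarrow> int" where "dv j = (if j < 8 then uv (dp j) else uv 4 \<ominus> uv 5)"
definition piv :: "nat \<Rightarrow> nat" where "piv j = [0,2,6,8,10,12,14,16,18,20,4] ! j"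
definition kap :: "int \<Rightarrow> nat \<Rightarrow> int" where
  "kap m = uv 0 \<oplus> sm m (uv 1) \<oplus> uv 5 \<oplus> uv 7 \<oplus> uv 11 \<oplus> uv 15 \<oplus> uv 19"
definition bet :: "int \<Rightarrow> nat \<Rightarrow> int" where "bet a = uv 2 \<oplus> sm a (uv 3)"

lemmas fsimps = form_add_l form_add_r form_sm_l form_sm_r form_diff_l form_diff_r form_uv
   k3_gram_def e8m_gram_def e8_adj_def

lemma kk: "k3_form (kap m) (kap m) = 2*m - 8" by (simp add: kap_def fsimps)
lemma bb: "k3_form (bet a) (bet a) = 2*a" by (simp add: bet_def fsimps)
lemma kb: "k3_form (kap m) (bet a) = 0" by (simp add: kap_def bet_def fsimps)
lemma lat_all: "kap m \<in> k3_lattice" "bet a \<in> k3_lattice" "\<forall>i<9. dv i \<in> k3_lattice"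
  by (simp_all add: kap_def bet_def dv_def dp_def lat_uv lat_ad lat_sm lat_sb numeral_eq_Suc All_less_Suc)
lemma all9: "(\<forall>i<(9::nat). P i) = (P 0 \<and> P 1 \<and> P 2 \<and> P 3 \<and> P 4 \<and> P 5 \<and> P 6 \<and> P 7 \<and> P 8)"
  by (simp add: numeral_eq_Suc All_less_Suc conj_ac)
lemma kd: "\<forall>i<9. k3_form (kap m) (dv i) = 1 \<and> k3_form (bet a) (dv i) = 0"
  unfolding all9 by (simp add: kap_def bet_def dv_def dp_def fsimps)
lemma dd: "\<forall>i<9. \<forall>j<9. k3_form (dv i) (dv j) = (if i = j then -2 else 0)"
  unfolding all9 by (simp add: dv_def dp_def fsimps)
lemma pv: "\<forall>j<11. \<forall>l<11. ((kap m # bet a # map dv [0..<9]) ! l) (piv j) = (if j = l then 1 else 0)"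
  by (simp add: kap_def bet_def dv_def dp_def piv_def uv_def ad_def sm_def sb_def numeral_eq_Suc All_less_Suc)

lemma vs_nth: "l < k + 2 \<Longrightarrow> k \<le> 9 \<Longrightarrow>
  (kap m # bet a # map dv [0..<k]) ! l = (kap m # bet a # map dv [0..<9]) ! l"
  by (auto simp: nth_Cons split: nat.split)

theorem lemma4p5:
  fixes k :: nat and A B :: int
  assumes "k \<le> 9" and "even A" and "even B"
  shows "\<exists>\<kappa> \<beta> (d :: nat \<Rightarrow> nat \<Rightarrow> int).
           \<kappa> \<in> k3_lattice \<and> \<beta> \<in> k3_lattice \<and> (\<forall>i<k. d i \<in> k3_lattice) \<and>
           k3_form \<kappa> \<kappa> = B \<and> k3_form \<beta> \<beta> = A \<and> k3_form \<kappa> \<beta> = 0 \<and>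
           (\<forall>i<k. k3_form \<kappa> (d i) = 1 \<and> k3_form \<beta> (d i) = 0) \<and>
           (\<forall>i<k. \<forall>j<k. k3_form (d i) (d j) = (if i = j then -2 else 0)) \<and>
           k3_primitive (lattice_span (\<kappa> # \<beta> # map d [0..<k]))"
proof (intro exI conjI)
  let ?m = "B div 2 + 4" and ?a = "A div 2"
  show "kap ?m \<in> k3_lattice" "bet ?a \<in> k3_lattice" by (rule lat_all)+
  show "\<forall>i<k. dv i \<in> k3_lattice" using lat_all(3) assms(1) by auto
  show "k3_form (kap ?m) (kap ?m) = B" using kk assms(3) by simp
  show "k3_form (bet ?a) (bet ?a) = A" using bb assms(2) by simp
  show "k3_form (kap ?m) (bet ?a) = 0" by (rule kb)
  show "\<forall>i<k. k3_form (kap ?m) (dv i) = 1 \<and> k3_form (bet ?a) (dv i) = 0" using kd assms(1) by auto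
  show "\<forall>i<k. \<forall>j<k. k3_form (dv i) (dv j) = (if i = j then -2 else 0)" using dd assms(1) by auto
  show "k3_primitive (lattice_span (kap ?m # bet ?a # map dv [0..<k]))"
  proof (rule prim[where piv = piv])
    show "\<forall>v\<in>set (kap ?m # bet ?a # map dv [0..<k]). v \<in> k3_lattice"
      using lat_all assms(1) by auto
    fix j l assume j: "j < length (kap ?m # bet ?a # map dv [0..<k])"
      and l: "l < length (kap ?m # bet ?a # map dv [0..<k])"
    then have "j < 11" "l < 11" "l < k + 2" using assms(1) by auto
    then show "((kap ?m # bet ?a # map dv [0..<k]) ! l) (piv j) = (if j = l then 1 else 0)"
      using pv[of ?m ?a] vs_nth[of l k ?m ?a] assms(1) by auto
  qed
qed

end
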